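(* Let $n,m\ge1$ and let $I=(\bar v_1,\dots,\bar v_m,\bar v)$ with $\bar v_i,\bar v\in\mathbb{Z}_3^n$. Set $\bar v'=\bar v+\sum_{i=1}^m\bar v_i$ and let $E_I$ be the equation $$\prod_{i=1}^m z_i^{-1}c_{\bar v_i}z_i=c_{\bar v'}$$ over $\mathbb{Z}_3^n\rtimes\mathbb{Z}_3^\ast$, where $c_{\bar w}=(\bar w,1)$. Then there exist $\varepsilon_1,\dots,\varepsilon_m\in\{0,1\}$ with $\sum_{i=1}^m\varepsilon_i\bar v_i=\bar v$ in $\mathbb{Z}_3^n$ if and only if $E_I$ has a solution $(z_1,\dots,z_m)$ in $\mathbb{Z}_3^n\rtimes\mathbb{Z}_3^\ast$.
   Context: $\mathbb{Z}_p^n\rtimes\mathbb{Z}_p^\ast$ is the set of pairs $(\bar x,\alpha)$ with $\bar x\in\mathbb{Z}_p^n$, $\alpha\in\mathbb{Z}_p^\ast$, with multiplication $(\bar x,\alpha)(\bar y,\beta)=(\bar x+\alpha\bar y,\alpha\beta)$ (scalar multiplication mod $p$). *)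

theory Defs
  imports "HOL-Analysis.Finite_Cartesian_Product" "HOL-Library.Numeral_Type" "HOL-Algebra.Group"
begin

text \<open>The group Z_3^n \<rtimes> Z_3^*: pairs (x, a) with x a vector over Z_3 (the type 3,
  integers mod 3) indexed by a finite type 'n (so n = CARD('n) \<ge> 1), and a a unit of Z_3,
  with multiplication (x,a)(y,b) = (x + a y, a b).\<close>
definition SD3 :: "((3, 'n::finite) vec \<times> 3) monoid" where
  "SD3 = \<lparr> carrier = {(x, a). a \<noteq> 0},
           mult = (\<lambda>(x, a) (y, b). (x + a *s y, a * b)),
           one = (0, 1) \<rparr>"

definition cst :: "(3, 'n::finite) vec \<Rightarrow> (3, 'n) vec \<times> 3" where
  "cst w = (w, 1)"

definition gprod :: "('a, 'b) monoid_scheme \<Rightarrow> 'a list \<Rightarrow> 'a" where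
  "gprod G xs = foldr (\<lambda>a b. a \<otimes>\<^bsub>G\<^esub> b) xs \<one>\<^bsub>G\<^esub>"

end

theory Submission
  imports Defs
begin

lemma three_cases: "(a::3) = 0 \<or> a = 1 \<or> a = 2"
proof (cases a)
  case (of_int z)
  have "0 \<le> z" "z < 3" using of_int by simp_all
  then have "z = 0 \<or> z = 1 \<or> z = 2" by arith
  then show ?thesis using of_int by auto
qed

lemma sq3: "(a::3) \<noteq> 0 \<Longrightarrow> a * a = 1"
  using three_cases[of a] by auto

lemma SD3_mult: "(x, a) \<otimes>\<^bsub>SD3\<^esub> (y, b) = (x + a *s y, a * b)"
  by (simp add: SD3_def)

lemma SD3_one: "\<one>\<^bsub>SD3\<^esub> = (0, 1)"
  by (simp add: SD3_def)

lemma SD3_inv: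
  assumes "(a::3) \<noteq> 0"
  shows "inv\<^bsub>SD3\<^esub> (x, a) = (- (a *s x), a)"
proof -
  have aa: "a * a = 1" using sq3[OF assms] .
  show ?thesis
    unfolding m_inv_def
  proof (rule the_equality)
    show "(- (a *s x), a) \<in> carrier SD3 \<and> (x, a) \<otimes>\<^bsub>SD3\<^esub> (- (a *s x), a) = \<one>\<^bsub>SD3\<^esub> \<and>
          (- (a *s x), a) \<otimes>\<^bsub>SD3\<^esub> (x, a) = \<one>\<^bsub>SD3\<^esub>"
      using assms aa by (simp add: SD3_def vector_smult_rneg vector_smult_assoc)
  next
    fix y assume h: "y \<in> carrier SD3 \<and> (x, a) \<otimes>\<^bsub>SD3\<^esub> y = \<one>\<^bsub>SD3\<^esub> \<and> y \<otimes>\<^bsub>SD3\<^esub> (x, a) = \<one>\<^bsub>SD3\<^esub>"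
    obtain y1 b where y: "y = (y1, b)" by (cases y)
    from h have e1: "x + a *s y1 = 0" and e2: "a * b = 1" by (simp_all add: y SD3_def)
    have "b = a * (a * b)" using aa by (simp add: mult.assoc[symmetric])
    then have bb: "b = a" using e2 by simp
    have "a *s x + a *s (a *s y1) = 0" using e1
      by (metis vector_add_ldistrib vector_smult_rzero)
    then have "a *s x + y1 = 0" using aa by (simp add: vector_smult_assoc)
    then have "y1 = - (a *s x)" by (simp add: eq_neg_iff_add_eq_0 add.commute)
    then show "y = (- (a *s x), a)" using y bb by simp
  qed
qed

lemma conj_cst:
  assumes "z \<in> carrier SD3"
  shows "inv\<^bsub>SD3\<^esub> z \<otimes>\<^bsub>SD3\<^esub> cst w \<otimes>\<^bsub>SD3\<^esub> z = cst (snd z *s w)"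
proof -
  obtain x a where z: "z = (x, a)" by (cases z)
  have a: "a \<noteq> 0" using assms z by (simp add: SD3_def)
  have aa: "a * a = 1" using sq3[OF a] .
  show ?thesis
    using aa by (simp add: z SD3_inv[OF a] cst_def SD3_mult vector_smult_assoc)
qed

lemma cst_mult: "cst a \<otimes>\<^bsub>SD3\<^esub> cst b = cst (a + b)"
  by (simp add: cst_def SD3_mult)

lemma gprod_cst: "gprod SD3 (map (\<lambda>i. cst (f i)) xs) = cst (sum_list (map f xs))"
  by (induction xs) (simp_all add: gprod_def SD3_one cst_def[symmetric] cst_mult)

lemma sum_list_upt: "sum_list (map f [0..<n]) = (\<Sum>i<n. f i)"
  by (simp add: sum_list_sum_nth atLeast0LessThan)

lemma sum_list_vs: "sum_list vs = (\<Sum>i<length vs. vs ! i)"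
  using sum_list_upt[of "\<lambda>i. vs ! i" "length vs"] by (simp add: map_nth)

lemma cst_inj: "cst a = cst b \<longleftrightarrow> a = b"
  by (simp add: cst_def)

theorem proposition4p6:
  fixes vs :: "(3, 'n::finite) vec list" and v :: "(3, 'n) vec"
  assumes "length vs \<ge> 1"
  shows "(\<exists>eps :: 3 list. length eps = length vs \<and> set eps \<subseteq> {0, 1} \<and>
            (\<Sum>i<length vs. (eps ! i) *s (vs ! i)) = v)
     \<longleftrightarrow>
         (\<exists>zs. length zs = length vs \<and> set zs \<subseteq> carrier SD3 \<and>
            gprod SD3 (map (\<lambda>i. inv\<^bsub>SD3\<^esub> (zs ! i) \<otimes>\<^bsub>SD3\<^esub> cst (vs ! i) \<otimes>\<^bsub>SD3\<^esub> (zs ! i))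
                          [0..<length vs])
            = cst (v + sum_list vs))"
proof -
  let ?n = "length vs"
  have key: "gprod SD3 (map (\<lambda>i. inv\<^bsub>SD3\<^esub> (zs ! i) \<otimes>\<^bsub>SD3\<^esub> cst (vs ! i) \<otimes>\<^bsub>SD3\<^esub> (zs ! i)) [0..<?n])
      = cst (\<Sum>i<?n. snd (zs ! i) *s vs ! i)"
    if "length zs = ?n" "set zs \<subseteq> carrier SD3" for zs
  proof -
    have "map (\<lambda>i. inv\<^bsub>SD3\<^esub> (zs ! i) \<otimes>\<^bsub>SD3\<^esub> cst (vs ! i) \<otimes>\<^bsub>SD3\<^esub> (zs ! i)) [0..<?n]
        = map (\<lambda>i. cst (snd (zs ! i) *s vs ! i)) [0..<?n]"
      using that by (auto intro!: conj_cst)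
    then show ?thesis unfolding gprod_cst sum_list_upt by (simp only: gprod_cst sum_list_upt)
  qed
  show ?thesis
  proof
    assume "\<exists>eps :: 3 list. length eps = ?n \<and> set eps \<subseteq> {0, 1} \<and>
            (\<Sum>i<?n. (eps ! i) *s (vs ! i)) = v"
    then obtain eps :: "3 list" where e: "length eps = ?n" "set eps \<subseteq> {0, 1}"
      "(\<Sum>i<?n. (eps ! i) *s (vs ! i)) = v" by blast
    define zs where "zs = map (\<lambda>i. (0::(3,'n) vec, eps ! i + 1)) [0..<?n]"
    have ne: "eps ! i + 1 \<noteq> 0" if "i < ?n" for i
    proof -
      have "eps ! i \<in> {0,1}" using e that nth_mem by (metis subsetD)
      then show ?thesis by auto
    qed
    have lz: "length zs = ?n" by (simp add: zs_def)
    have cz: "set zs \<subseteq> carrier SD3" using ne by (auto simp: zs_def SD3_def)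
    have "(\<Sum>i<?n. snd (zs ! i) *s vs ! i) = (\<Sum>i<?n. eps ! i *s vs ! i + vs ! i)"
      by (rule sum.cong) (simp_all add: zs_def vector_sadd_rdistrib)
    also have "\<dots> = v + sum_list vs" using e(3) by (simp add: sum.distrib sum_list_vs)
    finally show "\<exists>zs. length zs = ?n \<and> set zs \<subseteq> carrier SD3 \<and>
            gprod SD3 (map (\<lambda>i. inv\<^bsub>SD3\<^esub> (zs ! i) \<otimes>\<^bsub>SD3\<^esub> cst (vs ! i) \<otimes>\<^bsub>SD3\<^esub> (zs ! i))
                          [0..<?n]) = cst (v + sum_list vs)"
      using key[OF lz cz] lz cz by auto
  next
    assume "\<exists>zs. length zs = ?n \<and> set zs \<subseteq> carrier SD3 \<and>
            gprod SD3 (map (\<lambda>i. inv\<^bsub>SD3\<^esub> (zs ! i) \<otimes>\<^bsub>SD3\<^esub> cst (vs ! i) \<otimes>\<^bsub>SD3\<^esub> (zs ! i))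
                          [0..<?n]) = cst (v + sum_list vs)"
    then obtain zs where z: "length zs = ?n" "set zs \<subseteq> carrier SD3"
      "gprod SD3 (map (\<lambda>i. inv\<^bsub>SD3\<^esub> (zs ! i) \<otimes>\<^bsub>SD3\<^esub> cst (vs ! i) \<otimes>\<^bsub>SD3\<^esub> (zs ! i))
                          [0..<?n]) = cst (v + sum_list vs)" by blast
    have s: "(\<Sum>i<?n. snd (zs ! i) *s vs ! i) = v + sum_list vs"
      using z key[OF z(1,2)] by (simp add: cst_inj)
    define eps where "eps = map (\<lambda>i. snd (zs ! i) - 1) [0..<?n]"
    have "snd (zs ! i) \<noteq> 0" if "i < ?n" for i
    proof -
      have "zs ! i \<in> carrier SD3" using z that nth_mem by (metis subsetD)
      then show ?thesis by (cases "zs ! i") (simp add: SD3_def)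
    qed
    then have mem: "snd (zs ! i) - 1 \<in> {0,1}" if "i < ?n" for i
      using three_cases[of "snd (zs ! i)"] that by auto
    have se: "set eps \<subseteq> {0,1}"
    proof
      fix x assume "x \<in> set eps"
      then obtain i where i: "i < ?n" "x = eps ! i" by (auto simp: in_set_conv_nth eps_def)
      have "eps ! i = snd (zs ! i) - 1" using i by (simp add: eps_def)
      then show "x \<in> {0,1}" using mem[OF i(1)] i(2) by argo
    qed
    have "(\<Sum>i<?n. eps ! i *s vs ! i) = (\<Sum>i<?n. snd (zs ! i) *s vs ! i - vs ! i)"
      by (rule sum.cong) (simp_all add: eps_def vector_sub_rdistrib)
    also have "\<dots> = v" using s by (simp add: sum_subtractf sum_list_vs)
    finally show "\<exists>eps :: 3 list. length eps = ?n \<and> set eps \<subseteq> {0, 1} \<and>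
            (\<Sum>i<?n. (eps ! i) *s (vs ! i)) = v"
      using se by (intro exI[of _ eps]) (simp add: eps_def)
  qed
qed

end
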